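(* Let $G$ be a connected claw-free graph of order $n\ge 4$. Then $\gamma_{cI}(G)=n/2$ if and only if $G\in\Omega$.
   Context: All graphs are finite and simple; $N(v)$ is the open neighborhood of $v$. $G$ is claw-free if it has no induced subgraph isomorphic to $K_{1,3}$. For $f:V(G)\to\{0,1,2\}$ let $V_i=\{v: f(v)=i\}$ and $\omega(f)=\sum_v f(v)$. A covering Italian dominating function (CID function) of $G$ is an $f:V(G)\to\{0,1,2\}$ such that every vertex $v$ with $f(v)=0$ satisfies $\sum_{u\in N(v)}f(u)\ge 2$, and $V_0$ is an independent set. $\gamma_{cI}(G)$ is the minimum of $\omega(f)$ over all CID functions of $G$. A $k$-sun whose Hamiltonian graph is a cycle ($k\ge3$): take a cycle $v_1v_2\cdots v_kv_1$ and add $k$ new vertices $u_1,\dots,u_k$ with $u_i$ adjacent exactly to $v_i$ and $v_{i+1}$ (where $v_{k+1}=v_1$). A $k$-triangle ($k\ge1$): a path $v_1v_2\cdots v_k$ together with $k-1$ new vertices $u_1,\dots,u_{k-1}$, where $u_j$ is adjacent exactly to $v_j$ and $v_{j+1}$ (so it has $k-1$ triangles; a $1$-triangle is a single vertex). The graph $G(k_1,\dots,k_r)$: take disjoint copies of a $k_1$-triangle, a $k_2$-triangle, ..., a $k_r$-triangle, the $i$-th with path $v^i_1\cdots v^i_{k_i}$; then add $r$ new vertices $w_1,\dots,w_r$, where $w_i$ is adjacent exactly to $v^i_{k_i}$ and $v^{i+1}_1$ (indices of the triangles taken cyclically, so $w_r$ is adjacent to $v^r_{k_r}$ and $v^1_1$).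 (For example, $G(1,\dots,1)$ with $r$ entries is the cycle $C_{2r}$, and with a single entry $G(2)\cong K_4-e$.) $\Omega$ is the family of graphs $G$ that either (i) are a $k$-sun whose Hamiltonian graph is a cycle, or (ii) are of the form $G(k_1,\dots,k_r)$. *)

theory Defs
  imports Main
begin

definition simple_graph :: "'a set \<Rightarrow> ('a \<Rightarrow> 'a \<Rightarrow> bool) \<Rightarrow> bool" where
  "simple_graph V E \<longleftrightarrow> finite V \<and> (\<forall>x y. E x y \<longrightarrow> E y x) \<and> (\<forall>x. \<not> E x x)
     \<and> (\<forall>x y. E x y \<longrightarrow> x \<in> V \<and> y \<in> V)"

definition connected_graph :: "'a set \<Rightarrow> ('a \<Rightarrow> 'a \<Rightarrow> bool) \<Rightarrow> bool" where
  "connected_graph V E \<longleftrightarrow> (\<forall>x\<in>V. \<forall>y\<in>V. E\<^sup>*\<^sup>* x y)"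

definition claw_free :: "'a set \<Rightarrow> ('a \<Rightarrow> 'a \<Rightarrow> bool) \<Rightarrow> bool" where
  "claw_free V E \<longleftrightarrow> \<not> (\<exists>v\<in>V. \<exists>a\<in>V. \<exists>b\<in>V. \<exists>c\<in>V.
     E v a \<and> E v b \<and> E v c \<and> a \<noteq> b \<and> a \<noteq> c \<and> b \<noteq> c
     \<and> \<not> E a b \<and> \<not> E a c \<and> \<not> E b c)"

definition nbhd :: "'a set \<Rightarrow> ('a \<Rightarrow> 'a \<Rightarrow> bool) \<Rightarrow> 'a \<Rightarrow> 'a set" where
  "nbhd V E v = {u \<in> V. E v u}"

text \<open>Covering Italian dominating function (values outside V are irrelevant).\<close>
definition cid_function :: "'a set \<Rightarrow> ('a \<Rightarrow> 'a \<Rightarrow> bool) \<Rightarrow> ('a \<Rightarrow> nat) \<Rightarrow> bool" where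
  "cid_function V E f \<longleftrightarrow> (\<forall>v\<in>V. f v \<le> 2)
     \<and> (\<forall>v\<in>V. f v = 0 \<longrightarrow> (\<Sum>u\<in>nbhd V E v. f u) \<ge> 2)
     \<and> (\<forall>u\<in>V. \<forall>v\<in>V. E u v \<longrightarrow> \<not> (f u = 0 \<and> f v = 0))"

definition weight :: "'a set \<Rightarrow> ('a \<Rightarrow> nat) \<Rightarrow> nat" where
  "weight V f = (\<Sum>v\<in>V. f v)"

definition gamma_cI :: "'a set \<Rightarrow> ('a \<Rightarrow> 'a \<Rightarrow> bool) \<Rightarrow> nat" where
  "gamma_cI V E = (LEAST w. \<exists>f. cid_function V E f \<and> weight V f = w)"

definition graph_iso :: "'a set \<Rightarrow> ('a \<Rightarrow> 'a \<Rightarrow> bool) \<Rightarrow> 'b set \<Rightarrow> ('b \<Rightarrow> 'b \<Rightarrow> bool) \<Rightarrow> bool" where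
  "graph_iso V E V' E' \<longleftrightarrow> (\<exists>h. bij_betw h V V' \<and> (\<forall>x\<in>V. \<forall>y\<in>V. E x y \<longleftrightarrow> E' (h x) (h y)))"

definition symc :: "('a \<Rightarrow> 'a \<Rightarrow> bool) \<Rightarrow> 'a \<Rightarrow> 'a \<Rightarrow> bool" where
  "symc R x y \<longleftrightarrow> R x y \<or> R y x"

text \<open>k-sun: (0,i) is v_(i+1), (1,i) is u_(i+1), i < k.\<close>
definition sun_V :: "nat \<Rightarrow> (nat \<times> nat) set" where
  "sun_V k = {(t, i). t < 2 \<and> i < k}"

definition sun_E0 :: "nat \<Rightarrow> nat \<times> nat \<Rightarrow> nat \<times> nat \<Rightarrow> bool" where
  "sun_E0 k x y \<longleftrightarrow> (\<exists>i<k.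
      (x = (0, i) \<and> y = (0, Suc i mod k))
    \<or> (x = (1, i) \<and> y = (0, i))
    \<or> (x = (1, i) \<and> y = (0, Suc i mod k)))"

definition sun_E :: "nat \<Rightarrow> nat \<times> nat \<Rightarrow> nat \<times> nat \<Rightarrow> bool" where
  "sun_E k = symc (sun_E0 k)"

text \<open>G(k_1,...,k_r) for ks = [k_1,...,k_r]: (0,i,j) is v^(i+1)_(j+1) (j < k_i),
  (1,i,j) is u^(i+1)_(j+1) (j+1 < k_i), (2,i,0) is w_(i+1); indices i < r.\<close>
definition gk_V :: "nat list \<Rightarrow> (nat \<times> nat \<times> nat) set" where
  "gk_V ks = {(0, i, j) | i j. i < length ks \<and> j < ks ! i}
           \<union> {(1, i, j) | i j. i < length ks \<and> Suc j < ks ! i}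
           \<union> {(2, i, 0) | i. i < length ks}"

definition gk_E0 :: "nat list \<Rightarrow> nat \<times> nat \<times> nat \<Rightarrow> nat \<times> nat \<times> nat \<Rightarrow> bool" where
  "gk_E0 ks x y \<longleftrightarrow> (\<exists>i < length ks.
      (\<exists>j. Suc j < ks ! i \<and>
         ((x = (0, i, j) \<and> y = (0, i, Suc j))
        \<or> (x = (1, i, j) \<and> y = (0, i, j))
        \<or> (x = (1, i, j) \<and> y = (0, i, Suc j))))
    \<or> (x = (2, i, 0) \<and> y = (0, i, ks ! i - 1))
    \<or> (x = (2, i, 0) \<and> y = (0, Suc i mod length ks, 0)))"

definition gk_E :: "nat list \<Rightarrow> nat \<times> nat \<times> nat \<Rightarrow> nat \<times> nat \<times> nat \<Rightarrow> bool" where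
  "gk_E ks = symc (gk_E0 ks)"

definition in_Omega :: "'a set \<Rightarrow> ('a \<Rightarrow> 'a \<Rightarrow> bool) \<Rightarrow> bool" where
  "in_Omega V E \<longleftrightarrow>
     (\<exists>k\<ge>3. graph_iso V E (sun_V k) (sun_E k))
   \<or> (\<exists>ks. ks \<noteq> [] \<and> (\<forall>k\<in>set ks. k \<ge> 1) \<and> graph_iso V E (gk_V ks) (gk_E ks))"

end

theory Submission
  imports Defs
begin


lemma symc_sym: "symc R x y = symc R y x" unfolding symc_def by auto

lemma iso_sym:
  assumes "graph_iso V E V' E'" shows "graph_iso V' E' V E"
proof -
  obtain h where b: "bij_betw h V V'" and e: "\<forall>x\<in>V. \<forall>y\<in>V. E x y \<longleftrightarrow> E' (h x) (h y)"
    using assms unfolding graph_iso_def by blast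
  let ?g = "inv_into V h"
  have b2: "bij_betw ?g V' V" using b by (rule bij_betw_inv_into)
  have "\<forall>x\<in>V'. \<forall>y\<in>V'. E' x y \<longleftrightarrow> E (?g x) (?g y)"
  proof (intro ballI)
    fix x y assume "x \<in> V'" "y \<in> V'"
    then have "?g x \<in> V" "?g y \<in> V" "h (?g x) = x" "h (?g y) = y"
      using b by (auto simp: bij_betw_def inv_into_into f_inv_into_f)
    then show "E' x y \<longleftrightarrow> E (?g x) (?g y)" using e by metis
  qed
  then show ?thesis using b2 unfolding graph_iso_def by blast
qed

lemma iso_trans:
  assumes "graph_iso V E V' E'" "graph_iso V' E' V'' E''" shows "graph_iso V E V'' E''"
proof -
  obtain h where b: "bij_betw h V V'" and e: "\<forall>x\<in>V. \<forall>y\<in>V. E x y \<longleftrightarrow> E' (h x) (h y)"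
    using assms(1) unfolding graph_iso_def by blast
  obtain g where b2: "bij_betw g V' V''" and e2: "\<forall>x\<in>V'. \<forall>y\<in>V'. E' x y \<longleftrightarrow> E'' (g x) (g y)"
    using assms(2) unfolding graph_iso_def by blast
  have "bij_betw (g \<circ> h) V V''" using b b2 by (rule bij_betw_trans)
  moreover have "\<forall>x\<in>V. \<forall>y\<in>V. E x y \<longleftrightarrow> E'' ((g\<circ>h) x) ((g\<circ>h) y)"
    using e e2 b by (auto simp: bij_betw_def)
  ultimately show ?thesis unfolding graph_iso_def by blast
qed

lemma iso_cong:
  assumes "graph_iso V E V' E'" "\<And>x y. x \<in> V' \<Longrightarrow> y \<in> V' \<Longrightarrow> E' x y = E'' x y"
  shows "graph_iso V E V' E''"
  using assms unfolding graph_iso_def bij_betw_def by (metis image_eqI)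

lemma iso_card: "graph_iso V E V' E' \<Longrightarrow> card V = card V'"
  unfolding graph_iso_def by (metis bij_betw_same_card)

lemma cid_pullback:
  assumes "graph_iso V E V' E'" "cid_function V' E' f"
  shows "\<exists>g. cid_function V E g \<and> weight V g = weight V' f"
proof -
  obtain h where b: "bij_betw h V V'" and e: "\<forall>x\<in>V. \<forall>y\<in>V. E x y \<longleftrightarrow> E' (h x) (h y)"
    using assms(1) unfolding graph_iso_def by blast
  have img: "h ` nbhd V E v = nbhd V' E' (h v)" if "v \<in> V" for v
  proof
    show "h ` nbhd V E v \<subseteq> nbhd V' E' (h v)"
      using e that b by (auto simp: nbhd_def bij_betw_def)
    show "nbhd V' E' (h v) \<subseteq> h ` nbhd V E v"
    proof
      fix u assume "u \<in> nbhd V' E' (h v)"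
      then have u: "u \<in> V'" "E' (h v) u" by (auto simp: nbhd_def)
      then obtain w where "w \<in> V" "u = h w" using b by (auto simp: bij_betw_def)
      then show "u \<in> h ` nbhd V E v" using u e that by (auto simp: nbhd_def)
    qed
  qed
  have inj: "inj_on h V" using b by (auto simp: bij_betw_def)
  have sumeq: "(\<Sum>u\<in>nbhd V E v. f (h u)) = (\<Sum>u\<in>nbhd V' E' (h v). f u)" if "v \<in> V" for v
  proof -
    have "inj_on h (nbhd V E v)" using inj by (rule inj_on_subset) (auto simp: nbhd_def)
    then have "(\<Sum>u\<in>h ` nbhd V E v. f u) = (\<Sum>u\<in>nbhd V E v. f (h u))"
      by (simp add: sum.reindex)
    then show ?thesis using img[OF that] by simp
  qed
  have hV: "h v \<in> V'" if "v \<in> V" for v using b that by (auto simp: bij_betw_def)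
  have "cid_function V E (f \<circ> h)"
    using assms(2) unfolding cid_function_def
    using sumeq hV e by auto
  moreover have "weight V (f \<circ> h) = weight V' f"
    using sum.reindex_bij_betw[OF b, of f] by (simp add: weight_def comp_def)
  ultimately show ?thesis by blast
qed


lemma card_ge3_obtain:
  assumes "finite S" "3 \<le> card S"
  obtains a b c where "a \<in> S" "b \<in> S" "c \<in> S" "a \<noteq> b" "a \<noteq> c" "b \<noteq> c"
proof -
  obtain a where a: "a \<in> S" using assms by fastforce
  have "2 \<le> card (S - {a})" using assms a by simp
  then have "S - {a} \<noteq> {}" by (intro notI) simp
  then obtain b where b: "b \<in> S - {a}" by blast
  have "1 \<le> card (S - {a} - {b})" using assms a b
    by (metis One_nat_def \<open>2 \<le> card (S - {a})\<close> card_Diff_singleton diff_le_mono finite_Diff numeral_2_eq_2 diff_Suc_1)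
  then have "S - {a} - {b} \<noteq> {}" by (intro notI) simp
  then obtain c where c: "c \<in> S - {a} - {b}" by blast
  show ?thesis using a b c that by blast
qed

lemma lower_bound_struct:
  assumes sg: "simple_graph V E" and cf: "claw_free V E" and cid: "cid_function V E f"
  defines "Z \<equiv> {v\<in>V. f v = 0}"
  shows "card V \<le> 2 * weight V f"
    and "2 * weight V f = card V \<Longrightarrow>
           (\<forall>a\<in>Z. card (nbhd V E a) = 2) \<and> (\<forall>b\<in>V-Z. card {a\<in>Z. E b a} = 2)
           \<and> card (V - Z) = weight V f"
proof -
  have fin: "finite V" using sg by (simp add: simple_graph_def)
  have sym: "\<And>x y. E x y \<Longrightarrow> E y x" and irr: "\<And>x. \<not> E x x"
    and inV: "\<And>x y. E x y \<Longrightarrow> x \<in> V \<and> y \<in> V" using sg by (auto simp: simple_graph_def)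
  have le2: "\<forall>v\<in>V. f v \<le> 2" and zs: "\<forall>v\<in>V. f v = 0 \<longrightarrow> (\<Sum>u\<in>nbhd V E v. f u) \<ge> 2"
    and ind: "\<forall>u\<in>V. \<forall>v\<in>V. E u v \<longrightarrow> \<not> (f u = 0 \<and> f v = 0)"
    using cid by (auto simp: cid_function_def)
  define P where "P = V - Z"
  have ZV: "Z \<subseteq> V" by (auto simp: Z_def)
  have finZ: "finite Z" and finP: "finite P" using fin ZV finite_subset by (auto simp: P_def)
  have cardV: "card V = card Z + card P"
  proof -
    have "V = Z \<union> P" using ZV by (auto simp: P_def)
    moreover have "Z \<inter> P = {}" by (auto simp: P_def)
    ultimately show ?thesis using finZ finP card_Un_disjoint by metis
  qed
  have wP: "weight V f = sum f P"
  proof -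
    have "weight V f = sum f Z + sum f P"
      unfolding weight_def P_def using fin ZV by (metis sum.subset_diff add.commute)
    moreover have "sum f Z = 0" by (simp add: Z_def)
    ultimately show ?thesis by simp
  qed
  have c1: "card P \<le> sum f P"
  proof -
    have "card P = (\<Sum>u\<in>P. 1)" by simp
    also have "\<dots> \<le> sum f P" by (rule sum_mono) (auto simp: P_def Z_def)
    finally show ?thesis .
  qed
  define s where "s v = (\<Sum>u\<in>nbhd V E v. f u)" for v
  define c where "c u = card {v\<in>Z. E v u}" for u
  have c2: "2 * card Z \<le> sum s Z"
  proof -
    have "2 * card Z = (\<Sum>v\<in>Z. 2)" by simp
    also have "\<dots> \<le> sum s Z" by (rule sum_mono) (use zs in \<open>auto simp: Z_def s_def\<close>)
    finally show ?thesis .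
  qed
  have c3: "sum s Z = (\<Sum>u\<in>V. f u * c u)"
  proof -
    have "sum s Z = (\<Sum>v\<in>Z. \<Sum>u\<in>V. if E v u then f u else 0)"
      unfolding s_def nbhd_def using fin by (simp add: sum.inter_filter)
    also have "\<dots> = (\<Sum>u\<in>V. \<Sum>v\<in>Z. if E v u then f u else 0)" by (rule sum.swap)
    also have "\<dots> = (\<Sum>u\<in>V. f u * c u)"
    proof (rule sum.cong)
      fix u assume "u \<in> V"
      have "(\<Sum>v\<in>Z. if E v u then f u else 0) = (\<Sum>v\<in>{v\<in>Z. E v u}. f u)"
        using sum.inter_filter[OF finZ, of "\<lambda>v. f u" "\<lambda>v. E v u"] by simp
      also have "\<dots> = f u * c u" by (simp add: c_def)
      finally show "(\<Sum>v\<in>Z. if E v u then f u else 0) = f u * c u" .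
    qed simp
    finally show ?thesis .
  qed
  have cle: "c u \<le> 2" if "u \<in> V" for u
  proof (rule ccontr)
    assume "\<not> c u \<le> 2"
    then have c3: "3 \<le> card {v\<in>Z. E v u}" by (simp add: c_def)
    have "finite {v\<in>Z. E v u}" using finZ by simp
    from this c3 obtain a b d where abd: "a \<in> {v\<in>Z. E v u}" "b \<in> {v\<in>Z. E v u}" "d \<in> {v\<in>Z. E v u}"
      "a \<noteq> b" "a \<noteq> d" "b \<noteq> d" by (rule card_ge3_obtain)
    then have "a \<in> V" "b \<in> V" "d \<in> V" "f a = 0" "f b = 0" "f d = 0" "E u a" "E u b" "E u d"
      by (auto simp: Z_def sym)
    then have "\<not> E a b" "\<not> E a d" "\<not> E b d" using ind by blast+
    with \<open>E u a\<close> \<open>E u b\<close> \<open>E u d\<close> abd(4-6) \<open>a\<in>V\<close> \<open>b\<in>V\<close> \<open>d\<in>V\<close> that cf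
    show False unfolding claw_free_def by blast
  qed
  have c4: "(\<Sum>u\<in>V. f u * c u) \<le> (\<Sum>u\<in>V. f u * 2)"
    by (rule sum_mono) (simp add: cle)
  have w2: "(\<Sum>u\<in>V. f u * 2) = 2 * weight V f" unfolding weight_def by (simp add: sum_distrib_right[symmetric] mult.commute)
  have cZ: "card Z \<le> weight V f" using c2 c3 c4 w2 by linarith
  show "card V \<le> 2 * weight V f" using cardV cZ c1 wP by linarith
  assume eq: "2 * weight V f = card V"
  have cZe: "card Z = weight V f" and cPe: "card P = weight V f" using cZ c1 wP cardV eq by linarith+
  have f1: "f u = 1" if "u \<in> P" for u
  proof (rule ccontr)
    assume "f u \<noteq> 1"
    then have "1 < f u" using that by (auto simp: P_def Z_def)
    then have "(\<Sum>u\<in>P. 1) < sum f P"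
      using finP that by (intro sum_strict_mono_ex1) (auto simp: P_def Z_def)
    then show False using cPe wP by simp
  qed
  have s2: "s v = 2" if "v \<in> Z" for v
  proof (rule ccontr)
    assume "s v \<noteq> 2"
    then have "2 < s v" using that zs by (auto simp: Z_def s_def)
    then have "(\<Sum>v\<in>Z. 2) < sum s Z"
      using finZ that zs by (intro sum_strict_mono_ex1) (auto simp: Z_def s_def)
    then show False using cZe c3 c4 w2 by simp
  qed
  have ceq: "c u = 2" if "u \<in> P" for u
  proof (rule ccontr)
    assume "c u \<noteq> 2"
    moreover have "c u \<le> 2" using cle that by (auto simp: P_def)
    ultimately have "c u < 2" by simp
    then have "f u * c u < f u * 2" using f1[OF that] by simp
    then have "(\<Sum>u\<in>V. f u * c u) < (\<Sum>u\<in>V. f u * 2)"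
      using fin that cle by (intro sum_strict_mono_ex1) (auto simp: P_def)
    then show False using c2 c3 w2 cZe by linarith
  qed
  have "\<forall>a\<in>Z. card (nbhd V E a) = 2"
  proof
    fix a assume a: "a \<in> Z"
    have "nbhd V E a \<subseteq> P"
      using a ind unfolding nbhd_def P_def Z_def by blast
    then have "s a = (\<Sum>u\<in>nbhd V E a. 1)" unfolding s_def
      by (intro sum.cong) (auto simp: f1 subsetD)
    then show "card (nbhd V E a) = 2" using s2[OF a] by simp
  qed
  moreover have "\<forall>b\<in>V-Z. card {a\<in>Z. E b a} = 2"
  proof
    fix b assume b: "b \<in> V - Z"
    have "{a\<in>Z. E b a} = {v\<in>Z. E v b}" using sym by blast
    then show "card {a\<in>Z. E b a} = 2" using ceq b by (simp add: c_def P_def)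
  qed
  ultimately show "(\<forall>a\<in>Z. card (nbhd V E a) = 2) \<and> (\<forall>b\<in>V-Z. card {a\<in>Z. E b a} = 2)
           \<and> card (V - Z) = weight V f" using cPe by (simp add: P_def)
qed


definition C_E0 :: "nat \<Rightarrow> nat set \<Rightarrow> nat \<times> nat \<Rightarrow> nat \<times> nat \<Rightarrow> bool" where
  "C_E0 m S x y \<longleftrightarrow> (\<exists>i<m. (x = (0,i) \<and> y = (0, Suc i mod m) \<and> i \<in> S)
     \<or> (x = (1,i) \<and> y = (0,i)) \<or> (x = (1,i) \<and> y = (0, Suc i mod m)))"

definition pre :: "nat list \<Rightarrow> nat \<Rightarrow> nat" where
  "pre ks i = sum_list (take i ks)"

definition Sks :: "nat list \<Rightarrow> nat set" where
  "Sks ks = {pre ks i + j | i j. i < length ks \<and> Suc j < ks ! i}"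

definition phi :: "nat list \<Rightarrow> nat \<times> nat \<times> nat \<Rightarrow> nat \<times> nat" where
  "phi ks x = (case x of (t,i,j) \<Rightarrow>
     if t = 0 then (0, pre ks i + j) else if t = 1 then (1, pre ks i + j) else (1, pre ks i + ks ! i - 1))"

lemma pre_0[simp]: "pre ks 0 = 0" by (simp add: pre_def)

lemma pre_Suc: "i < length ks \<Longrightarrow> pre ks (Suc i) = pre ks i + ks ! i"
  by (simp add: pre_def take_Suc_conv_app_nth)

lemma pre_Cons_Suc[simp]: "pre (k # ks) (Suc i) = k + pre ks i"
  by (simp add: pre_def)

lemma pre_len: "pre ks (length ks) = sum_list ks" by (simp add: pre_def)

lemma sum_take_le: "sum_list (take n (xs::nat list)) \<le> sum_list xs"
proof -
  have "sum_list xs = sum_list (take n xs) + sum_list (drop n xs)"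
    by (metis append_take_drop_id sum_list_append)
  then show ?thesis by simp
qed

lemma pre_mono: "i \<le> i' \<Longrightarrow> pre ks i \<le> pre ks i'"
proof -
  assume "i \<le> i'"
  then have "take i ks = take i (take i' ks)" by (simp add: min_def)
  then show ?thesis unfolding pre_def by (metis sum_take_le)
qed

lemma pre_bound: "i < length ks \<Longrightarrow> pre ks i + ks ! i \<le> sum_list ks"
  using pre_Suc[of i ks] pre_mono[of "Suc i" "length ks" ks] pre_len[of ks] by simp

lemma decomp_unique:
  assumes "i < length ks" "j < ks ! i" "i' < length ks" "j' < ks ! i'" "pre ks i + j = pre ks i' + j'"
  shows "i = i' \<and> j = j'"
proof -
  have "\<not> i < i'" if "i < length ks" "j < ks ! i" "pre ks i + j = pre ks i' + j'" for i i' j j'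
  proof
    assume "i < i'"
    then have "pre ks (Suc i) \<le> pre ks i'" by (intro pre_mono) simp
    then show False using pre_Suc[OF that(1)] that by simp
  qed
  then have "i = i'" using assms by (metis linorder_neqE_nat)
  then show ?thesis using assms by simp
qed

lemma decomp_exists:
  "t < sum_list ks \<Longrightarrow> \<exists>i j. i < length ks \<and> j < ks ! i \<and> t = pre ks i + j"
proof (induction ks arbitrary: t)
  case Nil then show ?case by simp
next
  case (Cons k ks)
  show ?case
  proof (cases "t < k")
    case True
    then show ?thesis by (intro exI[of _ 0] exI[of _ t]) simp
  next
    case False
    then have "t - k < sum_list ks" using Cons.prems by simp
    then obtain i j where "i < length ks" "j < ks ! i" "t - k = pre ks i + j" using Cons.IH by blast
    then show ?thesis using False by (intro exI[of _ "Suc i"] exI[of _ j]) simp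
  qed
qed

lemma C_V_card: "card (sun_V m) = 2 * m"
proof -
  have "sun_V m = {..<2} \<times> {..<m}" by (auto simp: sun_V_def)
  then show ?thesis by (simp add: card_cartesian_product)
qed

lemma sun_is_C: "sun_E k = symc (C_E0 k {..<k})"
proof -
  have "sun_E0 k = C_E0 k {..<k}" by (intro ext) (auto simp: sun_E0_def C_E0_def)
  then show ?thesis unfolding sun_E_def by simp
qed

lemma suc_mod_ne: "2 \<le> m \<Longrightarrow> i < m \<Longrightarrow> Suc i mod m \<noteq> i"
proof (cases "Suc i < m")
  case False
  assume "2 \<le> m" "i < m"
  then have "Suc i = m" using False by simp
  then show ?thesis using \<open>2 \<le> m\<close> by auto
qed simp

lemma C_cid:
  assumes "2 \<le> m"
  shows "cid_function (sun_V m) (symc (C_E0 m S)) (\<lambda>(t,i). if t = 0 then 1 else 0)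
         \<and> weight (sun_V m) (\<lambda>(t,i). if t = 0 then 1 else 0) = m"
proof -
  let ?f = "\<lambda>(t::nat,i::nat). if t = 0 then 1 else (0::nat)"
  have a: "\<forall>v\<in>sun_V m. ?f v = 0 \<longrightarrow> (\<Sum>u\<in>nbhd (sun_V m) (symc (C_E0 m S)) v. ?f u) \<ge> 2"
  proof (intro ballI impI)
    fix v assume v: "v \<in> sun_V m" "?f v = 0"
    then obtain i where vi: "v = (1,i)" "i < m" by (auto simp: sun_V_def split: if_splits)
    have sub: "{(0,i), (0, Suc i mod m)} \<subseteq> nbhd (sun_V m) (symc (C_E0 m S)) v"
      using vi assms by (auto simp: nbhd_def sun_V_def symc_def C_E0_def)
    have ne: "(0::nat,i) \<noteq> (0, Suc i mod m)" using vi assms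
      using suc_mod_ne[OF assms vi(2)] by simp
    have fin: "finite (nbhd (sun_V m) (symc (C_E0 m S)) v)"
    proof -
      have "sun_V m = {..<2} \<times> {..<m}" by (auto simp: sun_V_def)
      then show ?thesis by (simp add: nbhd_def)
    qed
    have "(\<Sum>u\<in>{(0,i), (0, Suc i mod m)}. ?f u) = 2" using ne by simp
    moreover have "(\<Sum>u\<in>{(0,i), (0, Suc i mod m)}. ?f u) \<le> (\<Sum>u\<in>nbhd (sun_V m) (symc (C_E0 m S)) v. ?f u)"
      by (rule sum_mono2[OF fin sub]) simp
    ultimately show "(\<Sum>u\<in>nbhd (sun_V m) (symc (C_E0 m S)) v. ?f u) \<ge> 2" by simp
  qed
  have b: "\<forall>u\<in>sun_V m. \<forall>v\<in>sun_V m. symc (C_E0 m S) u v \<longrightarrow> \<not> (?f u = 0 \<and> ?f v = 0)"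
    by (auto simp: symc_def C_E0_def)
  have c: "weight (sun_V m) ?f = m"
  proof -
    have "sun_V m = {..<2} \<times> {..<m}" by (auto simp: sun_V_def)
    have "(\<Sum>t\<in>{..<2::nat}. \<Sum>i\<in>{..<m}. if t = 0 then 1 else (0::nat)) = sum ?f ({..<2} \<times> {..<m})"
      by (rule sum.cartesian_product)
    moreover have "(\<Sum>t\<in>{..<2::nat}. \<Sum>i\<in>{..<m}. if t = 0 then 1 else (0::nat)) = m"
      by (simp add: numeral_2_eq_2 lessThan_Suc)
    ultimately show ?thesis using \<open>sun_V m = _\<close> by (simp add: weight_def)
  qed
  show ?thesis using a b c by (auto simp: cid_function_def)
qed


lemma gk_V_cases:
  assumes "x \<in> gk_V ks"
  shows "(\<exists>i j. x = (0,i,j) \<and> i < length ks \<and> j < ks ! i)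
       \<or> (\<exists>i j. x = (1,i,j) \<and> i < length ks \<and> Suc j < ks ! i)
       \<or> (\<exists>i. x = (2,i,0) \<and> i < length ks)"
  using assms by (auto simp: gk_V_def)

lemma phi_simps[simp]:
  "phi ks (0,i,j) = (0, pre ks i + j)"
  "phi ks (1,i,j) = (1, pre ks i + j)"
  "phi ks (Suc 0,i,j) = (1, pre ks i + j)"
  "phi ks (2,i,j) = (1, pre ks i + ks ! i - 1)"
  by (auto simp: phi_def)

lemma G1:
  assumes ne: "ks \<noteq> []" and pos: "\<forall>k\<in>set ks. 1 \<le> k"
  shows "graph_iso (gk_V ks) (gk_E ks) (sun_V (sum_list ks)) (symc (C_E0 (sum_list ks) (Sks ks)))"
proof -
  let ?M = "sum_list ks" and ?r = "length ks"
  have posi: "1 \<le> ks ! i" if "i < ?r" for i using pos that by simp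
  have bnd: "pre ks i + ks ! i \<le> ?M" if "i < ?r" for i using pre_bound that by simp
  have uq: "\<And>i j i' j'. i < ?r \<Longrightarrow> j < ks ! i \<Longrightarrow> i' < ?r \<Longrightarrow> j' < ks ! i' \<Longrightarrow>
      pre ks i + j = pre ks i' + j' \<Longrightarrow> i = i' \<and> j = j'"
    using decomp_unique by blast
  have inj: "inj_on (phi ks) (gk_V ks)"
  proof (rule inj_onI)
    fix x y assume x: "x \<in> gk_V ks" and y: "y \<in> gk_V ks" and e: "phi ks x = phi ks y"
    have k1: "ks ! i - 1 < ks ! i" if "i < ?r" for i using posi[OF that] by simp
    from gk_V_cases[OF x] show "x = y"
    proof (elim disjE exE conjE)
      fix i j assume xi: "x = (0,i,j)" "i < ?r" "j < ks ! i"
      from gk_V_cases[OF y] show "x = y"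
      proof (elim disjE exE conjE)
        fix i' j' assume "y = (0,i',j')" "i' < ?r" "j' < ks ! i'"
        then show "x = y" using xi e uq[of i j i' j'] by simp
      next
        fix i' j' assume "y = (1,i',j')" "i' < ?r" "Suc j' < ks ! i'"
        then show "x = y" using xi e by simp
      next
        fix i' assume "y = (2,i',0)" "i' < ?r"
        then show "x = y" using xi e by simp
      qed
    next
      fix i j assume xi: "x = (1,i,j)" "i < ?r" "Suc j < ks ! i"
      from gk_V_cases[OF y] show "x = y"
      proof (elim disjE exE conjE)
        fix i' j' assume "y = (0,i',j')" "i' < ?r" "j' < ks ! i'"
        then show "x = y" using xi e by simp
      next
        fix i' j' assume "y = (1,i',j')" "i' < ?r" "Suc j' < ks ! i'"
        then show "x = y" using xi e uq[of i j i' j'] by simp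
      next
        fix i' assume "y = (2,i',0)" "i' < ?r"
        then show "x = y" using xi e uq[of i j i' "ks ! i' - 1"] k1[of i'] by simp
      qed
    next
      fix i assume xi: "x = (2,i,0)" "i < ?r"
      from gk_V_cases[OF y] show "x = y"
      proof (elim disjE exE conjE)
        fix i' j' assume "y = (0,i',j')" "i' < ?r" "j' < ks ! i'"
        then show "x = y" using xi e by simp
      next
        fix i' j' assume "y = (1,i',j')" "i' < ?r" "Suc j' < ks ! i'"
        then show "x = y" using xi e uq[of i "ks ! i - 1" i' j'] k1[of i] by simp
      next
        fix i' assume "y = (2,i',0)" "i' < ?r"
        then show "x = y" using xi e uq[of i "ks ! i - 1" i' "ks ! i' - 1"] k1[of i] k1[of i'] by simp
      qed
    qed
  qed
  have img: "phi ks ` gk_V ks = sun_V ?M"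
  proof
    show "phi ks ` gk_V ks \<subseteq> sun_V ?M"
    proof
      fix p assume "p \<in> phi ks ` gk_V ks"
      then obtain x where x: "x \<in> gk_V ks" "p = phi ks x" by blast
      from gk_V_cases[OF x(1)] show "p \<in> sun_V ?M"
      proof (elim disjE exE conjE)
        fix i j assume "x = (0,i,j)" "i < ?r" "j < ks ! i"
        then show ?thesis using x bnd[of i] by (auto simp: sun_V_def)
      next
        fix i j assume "x = (1,i,j)" "i < ?r" "Suc j < ks ! i"
        then show ?thesis using x bnd[of i] by (auto simp: sun_V_def)
      next
        fix i assume "x = (2,i,0)" "i < ?r"
        then show ?thesis using x bnd[of i] posi[of i] by (auto simp: sun_V_def)
      qed
    qed
    show "sun_V ?M \<subseteq> phi ks ` gk_V ks"
    proof
      fix p assume "p \<in> sun_V ?M"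
      then obtain t l where p: "p = (t,l)" "t < 2" "l < ?M" by (auto simp: sun_V_def)
      then obtain i j where ij: "i < ?r" "j < ks ! i" "l = pre ks i + j" using decomp_exists by blast
      show "p \<in> phi ks ` gk_V ks"
      proof (cases "t = 0")
        case True
        then have "p = phi ks (0,i,j)" using p ij by simp
        moreover have "(0,i,j) \<in> gk_V ks" using ij by (auto simp: gk_V_def)
        ultimately show ?thesis by blast
      next
        case False
        then have t1: "t = 1" using p by simp
        show ?thesis
        proof (cases "Suc j < ks ! i")
          case True
          then have "p = phi ks (1,i,j)" using p ij t1 by simp
          moreover have "(1,i,j) \<in> gk_V ks" using ij True by (auto simp: gk_V_def)
          ultimately show ?thesis by blast
        next
          case False
          then have "j = ks ! i - 1" using ij by simp
          then have "p = phi ks (2,i,0)" using p ij t1 by simp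
          moreover have "(2,i,0) \<in> gk_V ks" using ij by (auto simp: gk_V_def)
          ultimately show ?thesis by blast
        qed
      qed
    qed
  qed
  have preS: "pre ks (Suc i) = pre ks i + ks ! i" if "i < ?r" for i using pre_Suc that by simp
  have fwd: "C_E0 ?M (Sks ks) (phi ks x) (phi ks y)" if "gk_E0 ks x y" for x y
  proof -
    from that obtain i where i: "i < ?r" and
      cs: "(\<exists>j. Suc j < ks ! i \<and>
         ((x = (0, i, j) \<and> y = (0, i, Suc j))
        \<or> (x = (1, i, j) \<and> y = (0, i, j))
        \<or> (x = (1, i, j) \<and> y = (0, i, Suc j))))
        \<or> (x = (2, i, 0) \<and> y = (0, i, ks ! i - 1))
        \<or> (x = (2, i, 0) \<and> y = (0, Suc i mod ?r, 0))"
      unfolding gk_E0_def by blast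
    from cs show ?thesis
    proof (elim disjE exE conjE)
      fix j assume j: "Suc j < ks ! i" "x = (0,i,j)" "y = (0,i,Suc j)"
      let ?l = "pre ks i + j"
      have lt: "Suc ?l < ?M" using bnd[OF i] j by simp
      have "?l \<in> Sks ks" unfolding Sks_def using i j by blast
      then show ?thesis unfolding C_E0_def using j lt
        by (intro exI[of _ ?l]) simp
    next
      fix j assume j: "Suc j < ks ! i" "x = (1,i,j)" "y = (0,i,j)"
      let ?l = "pre ks i + j"
      have lt: "Suc ?l < ?M" using bnd[OF i] j by simp
      then show ?thesis unfolding C_E0_def using j
        by (intro exI[of _ ?l]) simp
    next
      fix j assume j: "Suc j < ks ! i" "x = (1,i,j)" "y = (0,i,Suc j)"
      let ?l = "pre ks i + j"
      have lt: "Suc ?l < ?M" using bnd[OF i] j by simp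
      then show ?thesis unfolding C_E0_def using j
        by (intro exI[of _ ?l]) simp
    next
      assume j: "x = (2,i,0)" "y = (0,i,ks ! i - 1)"
      let ?l = "pre ks i + ks ! i - 1"
      have lt: "?l < ?M" using bnd[OF i] posi[OF i] by simp
      have "?l = pre ks i + (ks ! i - 1)" using posi[OF i] by simp
      then show ?thesis unfolding C_E0_def using j lt
        by (intro exI[of _ ?l]) simp
    next
      assume j: "x = (2,i,0)" "y = (0,Suc i mod ?r,0)"
      let ?l = "pre ks i + ks ! i - 1"
      have lt: "?l < ?M" using bnd[OF i] posi[OF i] by simp
      have sl: "Suc ?l = pre ks (Suc i)" using preS[OF i] posi[OF i] by simp
      have "pre ks (Suc i mod ?r) = Suc ?l mod ?M"
      proof (cases "Suc i < ?r")
        case True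
        then have "Suc ?l < ?M" using sl bnd[OF True] posi[OF True] by simp
        then show ?thesis using sl True by simp
      next
        case False
        then have "Suc i = ?r" using i by simp
        then have "Suc ?l = ?M" using sl pre_len by metis
        then show ?thesis using \<open>Suc i = ?r\<close> by simp
      qed
      then show ?thesis unfolding C_E0_def using j lt
        by (intro exI[of _ ?l]) simp
    qed
  qed
  have bwd: "gk_E0 ks x y" if x: "x \<in> gk_V ks" and y: "y \<in> gk_V ks"
    and ce: "C_E0 ?M (Sks ks) (phi ks x) (phi ks y)" for x y
  proof -
    from ce obtain l where l: "l < ?M" and
      cs: "(phi ks x = (0,l) \<and> phi ks y = (0, Suc l mod ?M) \<and> l \<in> Sks ks)
     \<or> (phi ks x = (1,l) \<and> phi ks y = (0,l)) \<or> (phi ks x = (1,l) \<and> phi ks y = (0, Suc l mod ?M))"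
      unfolding C_E0_def by blast
    have y0: "\<exists>i2 j2. y = (0,i2,j2) \<and> i2 < ?r \<and> j2 < ks ! i2 \<and> pre ks i2 + j2 = snd (phi ks y)"
      if "fst (phi ks y) = 0"
      using gk_V_cases[OF y] that by auto
    from cs show ?thesis
    proof (elim disjE conjE)
      assume a: "phi ks x = (0,l)" "phi ks y = (0, Suc l mod ?M)" "l \<in> Sks ks"
      obtain i j where xi: "x = (0,i,j)" "i < ?r" "j < ks ! i" "l = pre ks i + j"
        using gk_V_cases[OF x] a(1) by auto
      obtain i' j' where "l = pre ks i' + j'" "i' < ?r" "Suc j' < ks ! i'"
        using a(3) unfolding Sks_def by blast
      then have "i' = i" "j' = j" using uq[of i j i' j'] xi by auto
      then have sj: "Suc j < ks ! i" using \<open>Suc j' < ks ! i'\<close> by simp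
      have lt: "Suc l < ?M" using bnd[OF xi(2)] sj xi by simp
      obtain i2 j2 where yi: "y = (0,i2,j2)" "i2 < ?r" "j2 < ks ! i2" "pre ks i2 + j2 = Suc l"
        using y0 a(2) lt by auto
      then have "i2 = i" "j2 = Suc j" using uq[of i2 j2 i "Suc j"] xi sj by auto
      then show ?thesis unfolding gk_E0_def using xi yi sj by blast
    next
      assume a: "phi ks x = (1,l)" "phi ks y = (0,l)"
      obtain i2 j2 where yi: "y = (0,i2,j2)" "i2 < ?r" "j2 < ks ! i2" "pre ks i2 + j2 = l"
        using y0 a(2) by auto
      from gk_V_cases[OF x] show ?thesis
      proof (elim disjE exE conjE)
        fix i j assume "x = (0,i,j)" then show ?thesis using a by simp
      next
        fix i j assume xi: "x = (1,i,j)" "i < ?r" "Suc j < ks ! i"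
        then have "i2 = i" "j2 = j" using uq[of i2 j2 i j] yi a by auto
        then show ?thesis unfolding gk_E0_def using xi yi by blast
      next
        fix i assume xi: "x = (2,i,0)" "i < ?r"
        then have "i2 = i" "j2 = ks ! i - 1" using uq[of i2 j2 i "ks ! i - 1"] yi a posi[OF xi(2)] by auto
        then show ?thesis unfolding gk_E0_def using xi yi by blast
      qed
    next
      assume a: "phi ks x = (1,l)" "phi ks y = (0,Suc l mod ?M)"
      obtain i2 j2 where yi: "y = (0,i2,j2)" "i2 < ?r" "j2 < ks ! i2" "pre ks i2 + j2 = Suc l mod ?M"
        using y0 a(2) by auto
      from gk_V_cases[OF x] show ?thesis
      proof (elim disjE exE conjE)
        fix i j assume "x = (0,i,j)" then show ?thesis using a by simp
      next
        fix i j assume xi: "x = (1,i,j)" "i < ?r" "Suc j < ks ! i"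
        then have sl: "Suc l = pre ks i + Suc j" using a by simp
        have lt: "Suc l < ?M" using bnd[OF xi(2)] xi(3) sl by simp
        then have "i2 = i" "j2 = Suc j" using uq[of i2 j2 i "Suc j"] yi sl xi by auto
        then show ?thesis unfolding gk_E0_def using xi yi by blast
      next
        fix i assume xi: "x = (2,i,0)" "i < ?r"
        then have sl: "Suc l = pre ks (Suc i)" using a preS[OF xi(2)] posi[OF xi(2)] by simp
        show ?thesis
        proof (cases "Suc i < ?r")
          case True
          then have "Suc l < ?M" using sl bnd[OF True] posi[OF True] by simp
          then have "i2 = Suc i" "j2 = 0" using uq[of i2 j2 "Suc i" 0] yi sl True posi[OF True] by auto
          moreover have "Suc i mod ?r = Suc i" using True by simp
          ultimately show ?thesis unfolding gk_E0_def using xi yi by metis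
        next
          case False
          then have "Suc i = ?r" using xi by simp
          then have "Suc l = ?M" using sl pre_len by metis
          then have "pre ks i2 + j2 = pre ks 0 + 0" using yi by simp
          moreover have "0 < ?r" using ne by simp
          ultimately have "i2 = 0" "j2 = 0" using uq[of i2 j2 0 0] yi posi[of 0] by auto
          moreover have "Suc i mod ?r = 0" using \<open>Suc i = ?r\<close> by simp
          moreover have "i < ?r" using xi by simp
          ultimately show ?thesis unfolding gk_E0_def using xi yi by metis
        qed
      qed
    qed
  qed
  have "\<forall>x\<in>gk_V ks. \<forall>y\<in>gk_V ks. gk_E ks x y \<longleftrightarrow> symc (C_E0 ?M (Sks ks)) (phi ks x) (phi ks y)"
    unfolding gk_E_def symc_def using fwd bwd by blast
  then show ?thesis unfolding graph_iso_def bij_betw_def using inj img by blast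
qed


lemma pre_snoc: "i \<le> length xs \<Longrightarrow> pre (xs @ [k]) i = pre xs i"
  by (simp add: pre_def)

lemma Sks_snoc: "Sks (xs @ [k]) = Sks xs \<union> {sum_list xs + j | j. Suc j < k}"
proof -
  have "Sks (xs @ [k]) = {pre (xs@[k]) i + j | i j. i < Suc (length xs) \<and> Suc j < (xs@[k]) ! i}"
    by (simp add: Sks_def)
  also have "\<dots> = {pre (xs@[k]) i + j | i j. i < length xs \<and> Suc j < (xs@[k]) ! i}
     \<union> {pre (xs@[k]) (length xs) + j | j. Suc j < (xs@[k]) ! (length xs)}"
    by (auto simp: less_Suc_eq) (metis nth_append_length)
  also have "\<dots> = Sks xs \<union> {sum_list xs + j | j. Suc j < k}"
  proof -
    have "{pre (xs@[k]) i + j | i j. i < length xs \<and> Suc j < (xs@[k]) ! i} = Sks xs"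
      unfolding Sks_def by (auto simp: pre_snoc nth_append)
    moreover have "pre (xs@[k]) (length xs) = sum_list xs" by (simp add: pre_snoc pre_len)
    ultimately show ?thesis by simp
  qed
  finally show ?thesis .
qed

lemma G2: "S \<subseteq> {..<m} \<Longrightarrow> \<exists>ks. ks \<noteq> [] \<and> (\<forall>k\<in>set ks. 1 \<le> k) \<and> sum_list ks = Suc m \<and> Sks ks = S"
proof (induction m arbitrary: S)
  case 0
  then have "S = {}" by auto
  moreover have "Sks [1] = {}" by (auto simp: Sks_def)
  ultimately show ?case by (intro exI[of _ "[1]"]) simp
next
  case (Suc m)
  have "S - {m} \<subseteq> {..<m}" using Suc.prems by auto
  then obtain ks0 where k0: "ks0 \<noteq> []" "\<forall>k\<in>set ks0. 1 \<le> k" "sum_list ks0 = Suc m" "Sks ks0 = S - {m}"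
    using Suc.IH by blast
  show ?case
  proof (cases "m \<in> S")
    case False
    let ?ks = "ks0 @ [1]"
    have "Sks ?ks = S" using Sks_snoc[of ks0 1] k0(4) False by auto
    then show ?thesis using k0 by (intro exI[of _ ?ks]) simp
  next
    case True
    obtain xs k where xk: "ks0 = xs @ [k]" using k0(1) by (metis rev_exhaust)
    let ?ks = "xs @ [Suc k]"
    have k1: "1 \<le> k" using k0(2) xk by simp
    have sm: "sum_list xs + k = Suc m" using k0(3) xk by simp
    have "{sum_list xs + j | j. Suc j < Suc k} = {sum_list xs + j | j. Suc j < k} \<union> {m}"
    proof
      show "{sum_list xs + j | j. Suc j < Suc k} \<subseteq> {sum_list xs + j | j. Suc j < k} \<union> {m}"
        using sm by (auto simp: less_Suc_eq)
      show "{sum_list xs + j | j. Suc j < k} \<union> {m} \<subseteq> {sum_list xs + j | j. Suc j < Suc k}"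
      proof
        fix t assume "t \<in> {sum_list xs + j | j. Suc j < k} \<union> {m}"
        then show "t \<in> {sum_list xs + j | j. Suc j < Suc k}"
        proof
          assume "t \<in> {m}"
          then have "t = sum_list xs + (k - 1)" using sm k1 by simp
          then show ?thesis using k1 by (intro CollectI exI[of _ "k - 1"]) simp
        qed auto
      qed
    qed
    then have "Sks ?ks = Sks ks0 \<union> {m}" using Sks_snoc[of xs "Suc k"] Sks_snoc[of xs k] xk by auto
    then have "Sks ?ks = S" using k0(4) True by auto
    then show ?thesis using k0 xk sm by (intro exI[of _ ?ks]) auto
  qed
qed


fun seq :: "('a \<Rightarrow> 'a \<Rightarrow> 'a) \<Rightarrow> 'a \<Rightarrow> 'a \<Rightarrow> nat \<Rightarrow> 'a" where
  "seq nx p x0 0 = x0"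
| "seq nx p x0 (Suc 0) = nx x0 p"
| "seq nx p x0 (Suc (Suc k)) = nx (seq nx p x0 (Suc k)) (seq nx p x0 k)"

lemma symc_commute: "symc R x y = symc R y x" unfolding symc_def by auto

lemma C11: "\<not> symc (C_E0 m S) (1,i) (1,i')"
  by (auto simp: symc_def C_E0_def)

lemma C10: "i < m \<Longrightarrow> symc (C_E0 m S) (1,i) (0,i') \<longleftrightarrow> (i' = i \<or> i' = Suc i mod m)"
  by (auto simp: symc_def C_E0_def)

lemma C00: "i < m \<Longrightarrow> i' < m \<Longrightarrow> symc (C_E0 m S) (0,i) (0,i') \<longleftrightarrow>
   ((i' = Suc i mod m \<and> i \<in> S) \<or> (i = Suc i' mod m \<and> i' \<in> S))"
  by (auto simp: symc_def C_E0_def)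

locale cyc =
  fixes V :: "'a set" and E :: "'a \<Rightarrow> 'a \<Rightarrow> bool" and A :: "'a set"
  assumes sg: "simple_graph V E" and conn: "connected_graph V E" and cf: "claw_free V E"
    and AV: "A \<subseteq> V"
    and indep: "\<forall>a\<in>A. \<forall>a'\<in>A. \<not> E a a'"
    and degA: "\<forall>a\<in>A. card (nbhd V E a) = 2"
    and degB: "\<forall>b\<in>V-A. card {a\<in>A. E b a} = 2"
begin

definition H where "H u v \<longleftrightarrow> E u v \<and> (u \<in> A \<or> v \<in> A)"

lemma Esym: "E u v \<Longrightarrow> E v u" using sg by (auto simp: simple_graph_def)
lemma Eirr: "\<not> E u u" using sg by (auto simp: simple_graph_def)
lemma EV: "E u v \<Longrightarrow> u \<in> V \<and> v \<in> V" using sg by (auto simp: simple_graph_def)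
lemma finV: "finite V" using sg by (auto simp: simple_graph_def)

lemma Hsym: "H u v \<Longrightarrow> H v u" by (auto simp: H_def Esym)
lemma HV: "H u v \<Longrightarrow> u \<in> V \<and> v \<in> V" by (auto simp: H_def EV)
lemma Hirr: "\<not> H u u" by (auto simp: H_def Eirr)
lemma Halt: "H u v \<Longrightarrow> (u \<in> A \<longleftrightarrow> v \<notin> A)" using indep by (auto simp: H_def)
lemma HA: "u \<in> A \<Longrightarrow> H u v \<longleftrightarrow> E u v" by (auto simp: H_def)

lemma NH: "v \<in> V \<Longrightarrow> card {u. H v u} = 2"
proof (cases "v \<in> A")
  case True
  assume "v \<in> V"
  have "{u. H v u} = nbhd V E v" using True by (auto simp: H_def nbhd_def EV)
  then show ?thesis using degA True by simp
next
  case False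
  assume "v \<in> V"
  have "{u. H v u} = {a\<in>A. E v a}" using False by (auto simp: H_def)
  then show ?thesis using degB False \<open>v \<in> V\<close> by simp
qed

definition other where "other v p = (SOME u. H v u \<and> u \<noteq> p)"

lemma other:
  assumes "v \<in> V" "H v p"
  shows "H v (other v p) \<and> other v p \<noteq> p \<and> (\<forall>u. H v u \<longrightarrow> u = p \<or> u = other v p)"
proof -
  obtain a b where ab: "{u. H v u} = {a,b}" "a \<noteq> b" using NH[OF assms(1)] card_2_iff by metis
  have ex: "\<exists>u. H v u \<and> u \<noteq> p"
  proof -
    have "H v a" "H v b" using ab by auto
    then show ?thesis using ab(2) by metis
  qed
  have o: "H v (other v p) \<and> other v p \<noteq> p" unfolding other_def using someI_ex[OF ex] .
  have "p \<in> {a,b}" "other v p \<in> {a,b}" using assms(2) o ab(1) by blast+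
  then have "{a,b} = {p, other v p}" using o ab(2) by auto
  then show ?thesis using o ab(1) by auto
qed

lemma common_A:
  assumes "b \<in> V - A" "c \<in> V - A" "E b c"
  shows "\<exists>a\<in>A. E a b \<and> E a c"
proof -
  obtain a1 a2 where ab: "{a\<in>A. E b a} = {a1,a2}" "a1 \<noteq> a2"
    using degB assms(1) card_2_iff by metis
  have a: "a1 \<in> A" "a2 \<in> A" "E b a1" "E b a2" using ab(1) by blast+
  have "a1 \<in> V" "a2 \<in> V" "c \<in> V" using a AV assms by auto
  have "a1 \<noteq> c" "a2 \<noteq> c" using a assms by auto
  have "\<not> E a1 a2" using indep a by blast
  have "b \<in> V" using assms by simp
  have "E a1 c \<or> E a2 c"
    using cf \<open>b \<in> V\<close> \<open>a1 \<in> V\<close> \<open>a2 \<in> V\<close> \<open>c \<in> V\<close> a assms(3) ab(2) \<open>a1 \<noteq> c\<close> \<open>a2 \<noteq> c\<close> \<open>\<not> E a1 a2\<close>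
    unfolding claw_free_def by blast
  then show ?thesis using a Esym by blast
qed

lemma P2:
  assumes b0: "b0 \<in> V - A" and yA: "y \<in> A" and Eb0y: "E b0 y"
  shows "\<exists>m S g. 2 \<le> m \<and> S \<subseteq> {..<m} \<and> bij_betw g (sun_V m) V
     \<and> (\<forall>p\<in>sun_V m. \<forall>q\<in>sun_V m. E (g p) (g q) \<longleftrightarrow> symc (C_E0 m S) p q)
     \<and> (\<forall>i<m. g (0,i) \<notin> A \<and> g (1,i) \<in> A)
     \<and> (\<forall>c. E y c \<longrightarrow> c \<noteq> b0 \<longrightarrow> (m - 1 \<in> S \<longleftrightarrow> E c b0))"
proof -
  define x where "x = seq other y b0"
  define pv where "pv k = (if k = 0 then y else x (k - 1))" for k
  have xS: "x (Suc k) = other (x k) (pv k)" for k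
    by (cases k) (simp_all add: x_def pv_def)
  have inv: "x k \<in> V \<and> H (x k) (pv k)" for k
  proof (induction k)
    case 0
    have "x 0 = b0" by (simp add: x_def)
    then show ?case using b0 yA Eb0y by (simp add: pv_def H_def)
  next
    case (Suc k)
    then have "H (x k) (x (Suc k))" using other xS by metis
    then show ?case using HV Hsym by (simp add: pv_def)
  qed
  have F1: "H (x k) (x (Suc k))" for k using inv other xS by metis
  have F2: "x (Suc k) \<noteq> pv k" for k using inv other xS by metis
  have F3: "H (x k) u \<longleftrightarrow> u = pv k \<or> u = x (Suc k)" for k u
    using inv other xS F1 by metis
  have x0: "x 0 = b0" by (simp add: x_def)
  have par: "x k \<in> A \<longleftrightarrow> odd k" for k
  proof (induction k)
    case 0 then show ?case using x0 b0 by simp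
  next
    case (Suc k) then show ?case using Halt[OF F1[of k]] by simp
  qed
  have "\<not> inj_on x {..card V}"
  proof
    assume "inj_on x {..card V}"
    moreover have "x ` {..card V} \<subseteq> V" using inv by auto
    ultimately have "card {..card V} \<le> card V" using card_inj_on_le finV by blast
    then show False by simp
  qed
  then obtain a b where "x a = x b" "a \<noteq> b" unfolding inj_on_def by blast
  then have exj: "\<exists>j. \<exists>i<j. x i = x j" by (metis linorder_neqE_nat)
  define j where "j = (LEAST j. \<exists>i<j. x i = x j)"
  have ex: "\<exists>i<j. x i = x j" unfolding j_def using LeastI_ex[OF exj] .
  have dist: "x i \<noteq> x i'" if "i < i'" "i' < j" for i i'
    using not_less_Least[of i' "\<lambda>j. \<exists>i<j. x i = x j"] that unfolding j_def by blast
  have injx: "k = k'" if "k < j" "k' < j" "x k = x k'" for k k'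
    using dist that by (metis linorder_neqE_nat)
  obtain i0 where i0: "i0 < j" "x i0 = x j" using ex by blast
  have "i0 = 0"
  proof (rule ccontr)
    assume "i0 \<noteq> 0"
    then obtain i1 where i1: "i0 = Suc i1" by (cases i0) auto
    have jj: "Suc (j - 1) = j" using i0 by simp
    have "H (x (j-1)) (x j)" using F1[of "j-1"] jj by simp
    then have h: "H (x i0) (x (j-1))" using i0 Hsym by simp
    have "j - 1 \<noteq> i0" using h Hirr by metis
    then have lt: "i0 < j - 1" using i0 by simp
    have "x (j-1) = x i1 \<or> x (j-1) = x (Suc i0)" using h F3 i1 by (simp add: pv_def)
    then show False
    proof
      assume "x (j-1) = x i1" then show False using dist[of i1 "j-1"] lt i1 by simp
    next
      assume a: "x (j-1) = x (Suc i0)"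
      show False
      proof (cases "Suc i0 < j - 1")
        case True then show False using dist[of "Suc i0" "j-1"] a by simp
      next
        case False
        then have "j = Suc (Suc i0)" using lt by simp
        then show False using F2[of "Suc i0"] i0 by (simp add: pv_def)
      qed
    qed
  qed
  then have xj: "x j = b0" using i0 x0 by simp
  have j1: "j \<noteq> 1"
  proof
    assume "j = 1"
    then have "x (Suc 0) = x 0" using xj x0 by simp
    then show False using F1[of 0] Hirr by metis
  qed
  have j2: "j \<noteq> 2"
  proof
    assume "j = 2"
    then have "x (Suc (Suc 0)) = b0" using xj by (simp add: numeral_2_eq_2)
    then show False using F2[of 1] x0 by (simp add: pv_def)
  qed
  have jpos: "0 < j" using i0 by simp
  have xl: "x (j - 1) = y"
  proof -
    have "H (x (j-1)) (x j)" using F1[of "j-1"] jpos by simp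
    then have "H (x 0) (x (j-1))" using xj x0 Hsym by simp
    then have "x (j-1) = y \<or> x (j-1) = x 1" using F3 by (simp add: pv_def)
    moreover have "1 < j - 1" using j1 j2 jpos by linarith
    then have "x 1 \<noteq> x (j-1)" using dist[of 1 "j-1"] by simp
    then have "x (j-1) \<noteq> x 1" by metis
    ultimately show ?thesis by simp
  qed
  have jeven: "even j" using par[of j] xj b0 by simp
  define m where "m = j div 2"
  have jm: "j = 2 * m" using jeven m_def by simp
  have m2: "2 \<le> m" using jm j1 j2 jpos by simp
  define S where "S = {i. i < m \<and> E (x (2*i)) (x (2 * Suc i))}"
  define g where "g p = (case p of (t,i) \<Rightarrow> x (2*i + t))" for p
  define R where "R = x ` {..<j}"
  have xR: "x k \<in> R" if "k \<le> j" for k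
  proof (cases "k = j")
    case True
    then have "x k = x 0" using xj x0 by simp
    then show ?thesis using jpos unfolding R_def by (metis image_eqI lessThan_iff)
  next
    case False then show ?thesis using that by (auto simp: R_def)
  qed
  have L: "u \<in> R" if "k < j" "H (x k) u" for k u
  proof -
    have "u = pv k \<or> u = x (Suc k)" using F3 that by simp
    then show ?thesis
    proof
      assume "u = pv k"
      then show ?thesis using xR[of "j-1"] xR[of "k-1"] xl that(1) by (cases "k = 0") (auto simp: pv_def)
    qed (use xR that in simp)
  qed
  have clos: "u \<in> R" if vR: "v \<in> R" and Evu: "E v u" for v u
  proof -
    obtain k where k: "k < j" "v = x k" using vR unfolding R_def by blast
    show ?thesis
    proof (cases "H v u")
      case True then show ?thesis using L k by simp
    next
      case False
      then have nA: "v \<notin> A" "u \<notin> A" using Evu by (auto simp: H_def)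
      then obtain a where a: "a \<in> A" "E a v" "E a u" using common_A EV Evu k by blast
      have "H v a" using a Esym by (simp add: H_def)
      then have "a \<in> R" using L k by simp
      then obtain k' where "k' < j" "a = x k'" unfolding R_def by blast
      then show ?thesis using L a HA by simp
    qed
  qed
  have cover: "V \<subseteq> R"
  proof
    fix v assume "v \<in> V"
    then have "E\<^sup>*\<^sup>* b0 v" using conn b0 by (simp add: connected_graph_def)
    then show "v \<in> R"
    proof (induction rule: rtranclp_induct)
      case base then show ?case using xR[of 0] x0 by simp
    next
      case (step u w) then show ?case using clos by blast
    qed
  qed
  have RV: "R \<subseteq> V" using inv by (auto simp: R_def)
  have gs: "g (t,i) = x (2*i+t)" for t i by (simp add: g_def)
  have bij: "bij_betw g (sun_V m) V"
    unfolding bij_betw_def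
  proof
    show "inj_on g (sun_V m)"
    proof (rule inj_onI)
      fix p q assume p: "p \<in> sun_V m" and q: "q \<in> sun_V m" and e: "g p = g q"
      obtain t i where ti: "p = (t,i)" "t < 2" "i < m" using p by (auto simp: sun_V_def)
      obtain t' i' where ti': "q = (t',i')" "t' < 2" "i' < m" using q by (auto simp: sun_V_def)
      have "2*i+t < j" "2*i'+t' < j" using ti ti' jm by auto
      then have "2*i+t = 2*i'+t'" using injx e ti ti' gs by metis
      then have "t = t' \<and> i = i'" using ti ti' by presburger
      then show "p = q" using ti ti' by simp
    qed
    show "g ` sun_V m = V"
    proof
      show "g ` sun_V m \<subseteq> V" using inv by (auto simp: g_def)
      show "V \<subseteq> g ` sun_V m"
      proof
        fix v assume "v \<in> V"
        then obtain k where k: "k < j" "v = x k" using cover unfolding R_def by blast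
        have "(k mod 2, k div 2) \<in> sun_V m" using k jm by (auto simp: sun_V_def)
        moreover have "g (k mod 2, k div 2) = v" using k by (simp add: g_def)
        ultimately show "v \<in> g ` sun_V m" by (metis image_eqI)
      qed
    qed
  qed
  have xmod: "x (2 * (Suc i mod m)) = x (2 * Suc i)" if "i < m" for i
  proof (cases "Suc i < m")
    case False
    then have "Suc i = m" using that by simp
    then show ?thesis using xj x0 jm by simp
  qed simp
  have ltj: "2*i < j" "2*i+1 < j" "2*(Suc i mod m) < j" if "i < m" for i
    using that jm m2 by auto
  have nbA: "E (x (2*i+1)) u \<longleftrightarrow> u = x (2*i) \<or> u = x (2 * (Suc i mod m))" if "i < m" for i u
  proof -
    have "x (2*i+1) \<in> A" using par by simp
    then have "E (x (2*i+1)) u \<longleftrightarrow> H (x (2*i+1)) u" using HA by simp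
    also have "\<dots> \<longleftrightarrow> u = pv (2*i+1) \<or> u = x (Suc (2*i+1))" using F3 by simp
    also have "\<dots> \<longleftrightarrow> u = x (2*i) \<or> u = x (2 * (Suc i mod m))"
      using xmod[OF that] by (simp add: pv_def)
    finally show ?thesis .
  qed
  have ix: "x (2*i) = x (2*i') \<longleftrightarrow> i = i'" if "i < m" "i' < m" for i i'
    using injx[of "2*i" "2*i'"] ltj that by auto
  have ix2: "x (2*i') = x (2*(Suc i mod m)) \<longleftrightarrow> i' = Suc i mod m" if "i < m" "i' < m" for i i'
  proof -
    have "Suc i mod m < m" using m2 by simp
    then show ?thesis using ix that by blast
  qed
  have e10: "E (x (2*i+1)) (x (2*i')) \<longleftrightarrow> symc (C_E0 m S) (1,i) (0,i')" if "i < m" "i' < m" for i i'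
    using nbA[OF that(1)] C10[OF that(1)] ix[OF that(2,1)] ix2[OF that] by auto
  have edges: "\<forall>p\<in>sun_V m. \<forall>q\<in>sun_V m. E (g p) (g q) \<longleftrightarrow> symc (C_E0 m S) p q"
  proof (intro ballI)
    fix p q assume p: "p \<in> sun_V m" and q: "q \<in> sun_V m"
    obtain t i where ti0: "p = (t,i)" "t < 2" "i < m" using p by (auto simp: sun_V_def)
    obtain t' i' where ti0': "q = (t',i')" "t' < 2" "i' < m" using q by (auto simp: sun_V_def)
    have ti: "p = (t,i)" "t = 0 \<or> t = 1" "i < m" using ti0 by auto
    have ti': "q = (t',i')" "t' = 0 \<or> t' = 1" "i' < m" using ti0' by auto
    from ti(2) ti'(2) show "E (g p) (g q) \<longleftrightarrow> symc (C_E0 m S) p q"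
    proof (elim disjE)
      assume "t = 1" "t' = 1"
      moreover have "x (2*i+1) \<in> A" "x (2*i'+1) \<in> A" using par by simp_all
      ultimately show ?thesis using ti ti' indep C11 gs by metis
    next
      assume "t = 1" "t' = 0"
      then show ?thesis using ti ti' e10 gs by simp
    next
      assume "t = 0" "t' = 1"
      then show ?thesis using ti ti' e10[of i' i] gs Esym symc_commute by (metis add_0_right)
    next
      assume t0: "t = 0" "t' = 0"
      have "E (x (2*i)) (x (2*i')) \<longleftrightarrow> ((i' = Suc i mod m \<and> i \<in> S) \<or> (i = Suc i' mod m \<and> i' \<in> S))"
      proof
        assume ee: "E (x (2*i)) (x (2*i'))"
        have nA: "x (2*i) \<in> V - A" "x (2*i') \<in> V - A" using par inv by auto
        obtain a where a: "a \<in> A" "E a (x (2*i))" "E a (x (2*i'))" using common_A[OF nA ee] by blast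
        have "a \<in> R" using a cover AV by auto
        then obtain k where k: "k < j" "a = x k" unfolding R_def by blast
        then have "odd k" using par a by simp
        then obtain l where l: "k = 2*l+1" using oddE by blast
        have lm: "l < m" using k l jm by simp
        have ii: "i = l \<or> i = Suc l mod m" using nbA[OF lm] a k l ix[OF ti(3) lm] ix2[OF lm ti(3)] by metis
        have ii': "i' = l \<or> i' = Suc l mod m" using nbA[OF lm] a k l ix[OF ti'(3) lm] ix2[OF lm ti'(3)] by metis
        have "i \<noteq> i'" using ee Eirr by metis
        then show "(i' = Suc i mod m \<and> i \<in> S) \<or> (i = Suc i' mod m \<and> i' \<in> S)"
          using ii ii' ee Esym xmod ti ti' by (auto simp: S_def)
      next
        assume "(i' = Suc i mod m \<and> i \<in> S) \<or> (i = Suc i' mod m \<and> i' \<in> S)"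
        then show "E (x (2*i)) (x (2*i'))"
          using xmod ti ti' Esym by (auto simp: S_def)
      qed
      then show ?thesis using C00[OF ti(3) ti'(3)] ti ti' t0 gs by simp
    qed
  qed
  have parts: "\<forall>i<m. g (0,i) \<notin> A \<and> g (1,i) \<in> A"
    using par by (simp add: g_def)
  have cprop: "\<forall>c. E y c \<longrightarrow> c \<noteq> b0 \<longrightarrow> (m - 1 \<in> S \<longleftrightarrow> E c b0)"
  proof (intro allI impI)
    fix c assume c: "E y c" "c \<noteq> b0"
    have "H (x (j-1)) c" using c yA xl by (simp add: H_def)
    then have "c = pv (j-1) \<or> c = x (Suc (j-1))" using F3 by simp
    then have "c = x (j - 2)" using c jpos xj j1 by (auto simp: pv_def numeral_2_eq_2)
    moreover have "2 * (m - 1) = j - 2" "2 * Suc (m - 1) = j" "Suc (Suc (j - 2)) = j" using jm m2 by auto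
    ultimately show "m - 1 \<in> S \<longleftrightarrow> E c b0" using m2 xj by (simp add: S_def)
  qed
  have "S \<subseteq> {..<m}" by (auto simp: S_def)
  then show ?thesis using m2 bij edges parts cprop by blast
qed

end


lemma ex2: "(\<exists>i<(2::nat). P i) \<longleftrightarrow> P 0 \<or> P 1"
proof
  assume "\<exists>i<(2::nat). P i"
  then obtain i where i: "i < 2" "P i" by blast
  then have "i = 0 \<or> i = 1" by auto
  then show "P 0 \<or> P 1" using i by blast
next
  assume "P 0 \<or> P 1"
  moreover have "(0::nat) < 2" "(1::nat) < 2" by simp_all
  ultimately show "\<exists>i<(2::nat). P i" by blast
qed

lemma C2expl: "C_E0 2 S p q \<longleftrightarrow> (p=(0,0) \<and> q=(0,1) \<and> 0\<in>S) \<or> (p=(0,1) \<and> q=(0,0) \<and> 1\<in>S)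
   \<or> (p=(1,0) \<and> q=(0,0)) \<or> (p=(1,0) \<and> q=(0,1)) \<or> (p=(1,1) \<and> q=(0,1)) \<or> (p=(1,1) \<and> q=(0,0))"
  unfolding C_E0_def ex2 by auto

lemma mod3: "3 \<le> m \<Longrightarrow> i < m \<Longrightarrow> Suc (Suc i mod m) mod m \<noteq> i"
proof -
  assume m: "3 \<le> m" "i < m"
  show ?thesis
  proof (cases "Suc i < m")
    case True
    then have e1: "Suc i mod m = Suc i" by simp
    show ?thesis
    proof (cases "Suc (Suc i) < m")
      case True then show ?thesis using e1 by simp
    next
      case False
      then have "Suc (Suc i) = m" using \<open>Suc i < m\<close> by simp
      then have "Suc (Suc i) mod m = 0" by simp
      moreover have "i \<noteq> 0" using \<open>Suc (Suc i) = m\<close> m(1) by simp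
      ultimately show ?thesis using e1 by simp
    qed
  next
    case False
    then have "Suc i = m" using m by simp
    then have "Suc i mod m = 0" by simp
    moreover have "Suc 0 mod m = 1" using m(1) by simp
    moreover have "i \<noteq> 1" using \<open>Suc i = m\<close> m(1) by simp
    ultimately show ?thesis by simp
  qed
qed

lemma C2: "S \<subseteq> {..<2} \<Longrightarrow> S \<noteq> {} \<Longrightarrow> symc (C_E0 2 S) p q = symc (C_E0 2 {0}) p q"
proof -
  assume S: "S \<subseteq> {..<2}" "S \<noteq> {}"
  have "0 \<in> S \<or> 1 \<in> S"
  proof -
    obtain z where "z \<in> S" using S(2) by blast
    then have "z < 2" using S(1) by blast
    then have "z = 0 \<or> z = 1" by auto
    then show ?thesis using \<open>z \<in> S\<close> by blast
  qed
  then show ?thesis unfolding symc_def C2expl by auto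
qed


lemma to_gk:
  assumes "graph_iso V E (sun_V m) (symc (C_E0 m S))" "1 \<le> m" "S \<subseteq> {..<m-1}"
  shows "in_Omega V E"
proof -
  obtain ks where ks: "ks \<noteq> []" "\<forall>k\<in>set ks. 1 \<le> k" "sum_list ks = Suc (m-1)" "Sks ks = S"
    using G2[OF assms(3)] by blast
  have "sum_list ks = m" using ks assms(2) by simp
  then have "graph_iso (sun_V m) (symc (C_E0 m S)) (gk_V ks) (gk_E ks)"
    using iso_sym[OF G1[OF ks(1,2)]] ks(4) by simp
  then have "graph_iso V E (gk_V ks) (gk_E ks)" using iso_trans assms(1) by blast
  then show ?thesis unfolding in_Omega_def using ks by blast
qed

theorem theorem8:
  fixes V :: "'a set" and E :: "'a \<Rightarrow> 'a \<Rightarrow> bool"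
  assumes "simple_graph V E" and "connected_graph V E" and "claw_free V E"
    and "card V \<ge> 4"
  shows "2 * gamma_cI V E = card V \<longleftrightarrow> in_Omega V E"
proof -
  note sg = assms(1) and conn = assms(2) and cf = assms(3) and n4 = assms(4)
  have cid1: "cid_function V E (\<lambda>_. 1)" by (simp add: cid_function_def)
  have exg: "\<exists>w f. cid_function V E f \<and> weight V f = w" using cid1 by blast
  have gex: "\<exists>f. cid_function V E f \<and> weight V f = gamma_cI V E"
    unfolding gamma_cI_def using LeastI_ex[of "\<lambda>w. \<exists>f. cid_function V E f \<and> weight V f = w"] exg by blast
  have gle: "gamma_cI V E \<le> weight V f" if "cid_function V E f" for f
    unfolding gamma_cI_def using that by (intro Least_le) blast
  have lower: "card V \<le> 2 * gamma_cI V E"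
  proof -
    obtain f0 where f0: "cid_function V E f0" "weight V f0 = gamma_cI V E" using gex by blast
    have "card V \<le> 2 * weight V f0" by (rule lower_bound_struct(1)[OF sg cf f0(1)])
    then show ?thesis using f0(2) by simp
  qed
  have up: "2 * gamma_cI V E \<le> card V"
    if iso: "graph_iso V E (sun_V m) (symc (C_E0 m S))" and m2: "2 \<le> m" for m S
  proof -
    obtain f where "cid_function V E f" "weight V f = m"
      using cid_pullback[OF iso, of "\<lambda>(t,i). if t = 0 then 1 else 0"] C_cid[OF m2, of S] by auto
    then have "gamma_cI V E \<le> m" using gle by metis
    moreover have "card V = 2 * m" using iso_card[OF iso] C_V_card by simp
    ultimately show ?thesis by simp
  qed
  show ?thesis
  proof
    assume om: "in_Omega V E"
    then show "2 * gamma_cI V E = card V"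
      unfolding in_Omega_def
    proof (elim disjE exE conjE)
      fix k assume "3 \<le> k" "graph_iso V E (sun_V k) (sun_E k)"
      then show ?thesis using up[of k "{..<k}"] lower sun_is_C by simp
    next
      fix ks assume ks: "ks \<noteq> []" "\<forall>k\<in>set ks. 1 \<le> k" "graph_iso V E (gk_V ks) (gk_E ks)"
      have iso: "graph_iso V E (sun_V (sum_list ks)) (symc (C_E0 (sum_list ks) (Sks ks)))"
        using iso_trans[OF ks(3) G1[OF ks(1,2)]] .
      have "card V = 2 * sum_list ks" using iso_card[OF iso] C_V_card by simp
      then have "2 \<le> sum_list ks" using n4 by simp
      then show ?thesis using up[OF iso] lower by simp
    qed
  next
    assume eq: "2 * gamma_cI V E = card V"
    obtain f where f: "cid_function V E f" "weight V f = gamma_cI V E" using gex by blast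
    define Z where "Z = {v\<in>V. f v = 0}"
    have st: "(\<forall>a\<in>Z. card (nbhd V E a) = 2) \<and> (\<forall>b\<in>V-Z. card {a\<in>Z. E b a} = 2)
           \<and> card (V - Z) = weight V f"
      using lower_bound_struct(2)[OF sg cf f(1)] eq f(2) unfolding Z_def by simp
    have ZV: "Z \<subseteq> V" by (auto simp: Z_def)
    have indep: "\<forall>a\<in>Z. \<forall>a'\<in>Z. \<not> E a a'" using f(1) unfolding Z_def cid_function_def by blast
    have cycZ: "cyc V E Z"
      unfolding cyc_def using sg conn cf ZV indep st by blast
    interpret cyc V E Z by (rule cycZ)
    have "card (V - Z) \<noteq> 0" using st eq f(2) n4 by simp
    then have "V - Z \<noteq> {}" by (intro notI) simp
    then obtain b0 where b0: "b0 \<in> V - Z" by blast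
    have "card {a\<in>Z. E b0 a} = 2" using st b0 by blast
    then have "{a\<in>Z. E b0 a} \<noteq> {}" by (intro notI) simp
    then obtain y0 where y0: "y0 \<in> Z" "E b0 y0" by blast
    show "in_Omega V E"
    proof (cases "\<exists>b\<in>V-Z. \<exists>y\<in>Z. \<exists>c. E b y \<and> E y c \<and> c \<noteq> b \<and> \<not> E c b")
      case True
      then obtain b y c where bc: "b \<in> V - Z" "y \<in> Z" "E b y" "E y c" "c \<noteq> b" "\<not> E c b" by blast
      obtain m S g where mg: "2 \<le> m" "S \<subseteq> {..<m}" "bij_betw g (sun_V m) V"
        "\<forall>p\<in>sun_V m. \<forall>q\<in>sun_V m. E (g p) (g q) \<longleftrightarrow> symc (C_E0 m S) p q"
        "\<forall>c. E y c \<longrightarrow> c \<noteq> b \<longrightarrow> (m - 1 \<in> S \<longleftrightarrow> E c b)"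
        using P2[OF bc(1-3)] by blast
      have "m - 1 \<notin> S" using mg(5) bc by blast
      have S1: "S \<subseteq> {..<m-1}"
      proof
        fix z assume "z \<in> S"
        then have "z < m" "z \<noteq> m - 1" using mg(2) \<open>m - 1 \<notin> S\<close> by auto
        then show "z \<in> {..<m-1}" by simp
      qed
      have "graph_iso (sun_V m) (symc (C_E0 m S)) V E"
        unfolding graph_iso_def
      proof (intro exI[of _ g] conjI)
        show "bij_betw g (sun_V m) V" by (rule mg(3))
        show "\<forall>p\<in>sun_V m. \<forall>q\<in>sun_V m. symc (C_E0 m S) p q \<longleftrightarrow> E (g p) (g q)"
          using mg(4) by simp
      qed
      then have isoG: "graph_iso V E (sun_V m) (symc (C_E0 m S))" by (rule iso_sym)
      have "1 \<le> m" using mg(1) by simp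
      then show ?thesis using to_gk[OF isoG _ S1] by simp
    next
      case False
      obtain m S g where mg: "2 \<le> m" "S \<subseteq> {..<m}" "bij_betw g (sun_V m) V"
        "\<forall>p\<in>sun_V m. \<forall>q\<in>sun_V m. E (g p) (g q) \<longleftrightarrow> symc (C_E0 m S) p q"
        "\<forall>i<m. g (0,i) \<notin> Z \<and> g (1,i) \<in> Z"
        using P2[OF b0 y0] by blast
      have "graph_iso (sun_V m) (symc (C_E0 m S)) V E"
        unfolding graph_iso_def
      proof (intro exI[of _ g] conjI)
        show "bij_betw g (sun_V m) V" by (rule mg(3))
        show "\<forall>p\<in>sun_V m. \<forall>q\<in>sun_V m. symc (C_E0 m S) p q \<longleftrightarrow> E (g p) (g q)"
          using mg(4) by simp
      qed
      then have iso: "graph_iso V E (sun_V m) (symc (C_E0 m S))" by (rule iso_sym)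
      have gV: "g p \<in> V" if "p \<in> sun_V m" for p using mg(3) that by (auto simp: bij_betw_def)
      have ginj: "inj_on g (sun_V m)" using mg(3) by (auto simp: bij_betw_def)
      have disj: "(i = Suc (Suc i mod m) mod m \<and> Suc i mod m \<in> S) \<or> i \<in> S" if i: "i < m" for i
      proof -
        let ?i' = "Suc i mod m"
        have i': "?i' < m" using mg(1) by simp
        have mem: "(0,i) \<in> sun_V m" "(1,i) \<in> sun_V m" "(0,?i') \<in> sun_V m"
          using i i' by (auto simp: sun_V_def)
        have "E (g (1,i)) (g (0,i))" using mg(4) mem C10[OF i] by simp
        then have e1: "E (g (0,i)) (g (1,i))" using Esym by blast
        have e2: "E (g (1,i)) (g (0,?i'))" using mg(4) mem C10[OF i] by simp
        have "(0::nat,?i') \<noteq> (0,i)" using suc_mod_ne[OF mg(1) i] by simp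
        then have ne: "g (0,?i') \<noteq> g (0,i)" using ginj mem inj_on_contraD by metis
        have "g (0,i) \<in> V - Z" using mg(5) gV mem i by blast
        moreover have "g (1,i) \<in> Z" using mg(5) i by blast
        ultimately have "E (g (0,?i')) (g (0,i))" using False e1 e2 ne by blast
        then have "symc (C_E0 m S) (0,?i') (0,i)" using mg(4) mem by blast
        then show ?thesis using C00[OF i' i] by simp
      qed
      show ?thesis
      proof (cases "3 \<le> m")
        case True
        have "S = {..<m}"
        proof
          show "S \<subseteq> {..<m}" by (rule mg(2))
          show "{..<m} \<subseteq> S"
          proof
            fix i assume "i \<in> {..<m}"
            then have i: "i < m" by simp
            show "i \<in> S" using disj[OF i] mod3[OF True i] by auto
          qed
        qed
        then have "graph_iso V E (sun_V m) (sun_E m)" using iso sun_is_C by simp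
        then show ?thesis unfolding in_Omega_def using True by blast
      next
        case False
        then have m2: "m = 2" using mg(1) by simp
        have "(0::nat) < m" using m2 by simp
        then have "S \<noteq> {}" using disj[of 0] by blast
        moreover have S2: "S \<subseteq> {..<2}" using mg(2) m2 by simp
        ultimately have ceq: "\<And>p q. symc (C_E0 2 S) p q = symc (C_E0 2 {0}) p q"
          using C2 by blast
        have iso2: "graph_iso V E (sun_V 2) (symc (C_E0 2 S))" using iso m2 by simp
        have "graph_iso V E (sun_V 2) (symc (C_E0 2 {0}))"
          by (rule iso_cong[OF iso2 ceq])
        moreover have "(1::nat) \<le> 2" "{0::nat} \<subseteq> {..<2-1}" by auto
        ultimately show ?thesis by (rule to_gk)
      qed
    qed
  qed
qed


end
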